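(* Let $p,q,r,s,t$ be parameters and let $(a_n)_{n\ge0}$ be defined by $a_0=1$, $a_1=p$, $a_2=q$ and, for $n\ge3$, $$a_n=r\,a_{n-1}+s\,a_{n-2}+t\sum_{k=1}^{n-3}a_ka_{n-k-2}.$$ Then the generating function $\sum_{n\ge0}a_nx^n$ equals $$\left(\frac{1-(r-p)x-(-q+pr+s-t)x^2}{1-rx-(s-2t)x^2},\ \frac{tx^2\bigl(1-(r-p)x-(-q+pr+s-t)x^2\bigr)}{(1-rx-(s-2t)x^2)^2}\right)\cdot c(x),$$ that is, $\frac{1-(r-p)x-(-q+pr+s-t)x^2}{1-rx-(s-2t)x^2}\,c\!\left(\frac{tx^2(1-(r-p)x-(-q+pr+s-t)x^2)}{(1-rx-(s-2t)x^2)^2}\right)$.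
   Context: $c(x)=\frac{1-\sqrt{1-4x}}{2x}$ is the generating function of the Catalan numbers. For power series $g(x)$ with $g(0)\neq0$ and $f(x)$ with $f(0)=0$, the Riordan array $(g,f)$ acts on a power series $h(x)$ by $(g,f)\cdot h(x)=g(x)h(f(x))$. *)

theory Defs
  imports "HOL-Computational_Algebra.Formal_Power_Series"
begin

text \<open>Generating function of the Catalan numbers,
  c(x) = (1 - sqrt(1-4x))/(2x) = sum_n (2n choose n)/(n+1) x^n.\<close>
definition catalan_fps :: "'a::field_char_0 fps" where
  "catalan_fps = Abs_fps (\<lambda>n. of_nat ((2*n) choose n) / of_nat (n+1))"

definition riordan_apply :: "'a::field fps \<Rightarrow> 'a fps \<Rightarrow> 'a fps \<Rightarrow> 'a fps" where
  "riordan_apply g f h = g * (h oo f)"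

end

theory Submission
  imports Defs
begin

lemma central_rec: "(m+1) * ((2*m+2) choose (m+1)) = 2*(2*m+1) * ((2*m) choose m)"
proof -
  have a: "Suc m * (Suc (2*m+1) choose Suc m) = Suc (2*m+1) * ((2*m+1) choose m)"
    by (rule Suc_times_binomial)
  have b: "Suc m * (Suc (2*m) choose Suc m) = Suc (2*m) * ((2*m) choose m)"
    by (rule Suc_times_binomial)
  have c: "((2*m+1) choose m) = ((2*m+1) choose (m+1))"
    using binomial_symmetric[of m "2*m+1"] by simp
  have "(m+1) * ((2*m+2) choose (m+1)) = (2*m+2) * ((2*m+1) choose m)" using a by simp
  also have "\<dots> = 2 * ((m+1) * ((2*m+1) choose (m+1)))" using c by simp
  also have "\<dots> = 2*(2*m+1) * ((2*m) choose m)" using b by simp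
  finally show ?thesis .
qed

lemma gchoose_Suc_rec:
  fixes a :: "'a::field_char_0"
  shows "(a gchoose Suc k) * of_nat (Suc k) = (a gchoose k) * (a - of_nat k)"
proof -
  have "(a gchoose Suc k) * fact (Suc k) = (\<Prod>i = 0..<Suc k. a - of_nat i)"
    by (rule gbinomial_mult_fact')
  also have "\<dots> = (\<Prod>i = 0..<k. a - of_nat i) * (a - of_nat k)" by simp
  also have "\<dots> = (a gchoose k) * fact k * (a - of_nat k)"
    by (simp add: gbinomial_mult_fact')
  finally have "(a gchoose Suc k) * of_nat (Suc k) * fact k = (a gchoose k) * (a - of_nat k) * fact k"
    by (simp add: fact_Suc algebra_simps)
  then show ?thesis by simp
qed

lemma u_eq:
  "((1/2::'a::field_char_0) gchoose Suc n) * (-4)^Suc n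
     = -2 * (of_nat ((2*n) choose n) / of_nat (n+1))"
proof (induction n)
  case 0
  then show ?case by simp
next
  case (Suc m)
  let ?u = "\<lambda>k. ((1/2::'a) gchoose k) * (-4)^k"
  let ?g1 = "(1/2::'a) gchoose Suc m" and ?g2 = "(1/2::'a) gchoose Suc (Suc m)"
  have H: "?g2 * (2 * of_nat m + 4) = - ((2 * of_nat m + 1) * ?g1)"
  proof -
    have h0: "?g2 * of_nat (Suc (Suc m)) = ?g1 * (1/2 - of_nat (Suc m))"
      by (rule gchoose_Suc_rec)
    have "?g2 * (2 * of_nat m + 4) = 2 * (?g2 * of_nat (Suc (Suc m)))"
      by (simp add: algebra_simps)
    also have "\<dots> = 2 * (?g1 * (1/2 - of_nat (Suc m)))" by (simp only: h0)
    also have "\<dots> = - ((2 * of_nat m + 1) * ?g1)" by (simp add: algebra_simps)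
    finally show ?thesis .
  qed
  have r: "?u (Suc (Suc m)) * of_nat (m+2) = ?u (Suc m) * (2 * (2 * of_nat m + 1))"
  proof -
    have "?u (Suc (Suc m)) * of_nat (m+2) = (-4)^Suc m * (-2) * (?g2 * (2 * of_nat m + 4))"
      by (simp add: algebra_simps)
    also have "\<dots> = ?u (Suc m) * (2 * (2 * of_nat m + 1))" unfolding H
      by (simp add: algebra_simps)
    finally show ?thesis .
  qed
  define C1 :: 'a where "C1 = of_nat ((2*m+2) choose (m+1))"
  define C0 :: 'a where "C0 = of_nat ((2*m) choose m)"
  have cr: "of_nat (m+1) * C1 = (2*(2*of_nat m+1)) * C0"
    unfolding C1_def C0_def
    using arg_cong[OF central_rec[of m], of "of_nat :: nat \<Rightarrow> 'a"]
    by (simp only: of_nat_mult of_nat_add of_nat_numeral of_nat_1)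
  have nz: "(1 + of_nat m :: 'a) \<noteq> 0" by (metis of_nat_Suc of_nat_neq_0)
  have nz2: "(of_nat (m+2) :: 'a) \<noteq> 0" by (metis add_2_eq_Suc' of_nat_neq_0)
  have IH: "?u (Suc m) = -2 * (C0 / of_nat (m+1))" using Suc.IH unfolding C0_def .
  have "?u (Suc (Suc m)) * of_nat (m+2) = -2 * (C0 / of_nat (m+1)) * (2 * (2 * of_nat m + 1))"
    by (simp only: r IH)
  also have "\<dots> = -2 * ((2 * (2 * of_nat m + 1)) * C0) / of_nat (m+1)" by simp
  also have "\<dots> = -2 * C1" unfolding cr[symmetric] using nz by (simp del: of_nat_add)
  finally have "?u (Suc (Suc m)) = -2 * C1 / of_nat (m+2)"
    using nz2 by (simp only: eq_divide_eq nz2 if_True not_False_eq_True)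
  moreover have "C1 = of_nat (2*Suc m choose Suc m)" unfolding C1_def
    by (simp add: mult_2)
  moreover have "(of_nat (Suc m + 1) :: 'a) = of_nat (m+2)" by simp
  ultimately show ?case by (simp only: mult_minus_left times_divide_eq_right)
qed

lemma catalan_sq:
  "(1 - 2 * fps_X * (catalan_fps :: 'a::field_char_0 fps))^2 = 1 - 4 * fps_X"
proof -
  define u :: "nat \<Rightarrow> 'a" where "u = (\<lambda>k. ((1/2::'a) gchoose k) * (-4)^k)"
  have S: "1 - 2 * fps_X * (catalan_fps :: 'a fps) = Abs_fps u"
  proof (rule fps_ext)
    fix n show "fps_nth (1 - 2 * fps_X * (catalan_fps :: 'a fps)) n = fps_nth (Abs_fps u) n"
    proof (cases n)
      case 0 then show ?thesis by (simp add: u_def)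
    next
      case (Suc m)
      have "fps_nth (2 * fps_X * (catalan_fps :: 'a fps)) (Suc m) = 2 * fps_nth catalan_fps m"
        by (simp add: mult.assoc numeral_fps_const)
      then show ?thesis using Suc u_eq[of m, where 'a='a]
        by (simp add: u_def catalan_fps_def)
    qed
  qed
  have "Abs_fps u ^ 2 = 1 - 4 * fps_X"
  proof (rule fps_ext)
    fix n
    have "fps_nth (Abs_fps u ^ 2) n = (\<Sum>i=0..n. u i * u (n - i))"
      by (simp add: power2_eq_square fps_mult_nth)
    also have "\<dots> = (\<Sum>i=0..n. ((1/2::'a) gchoose i) * ((1/2) gchoose (n-i))) * (-4)^n"
      unfolding sum_distrib_right
    proof (rule sum.cong)
      fix i assume "i \<in> {0..n}"
      then have "(-4::'a)^i * (-4)^(n-i) = (-4)^n" by (simp add: power_add[symmetric])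
      then show "u i * u (n - i) = ((1/2::'a) gchoose i) * ((1/2) gchoose (n-i)) * (-4)^n"
        unfolding u_def by (metis (no_types, lifting) mult.assoc mult.left_commute)
    qed simp
    also have "\<dots> = ((1::'a) gchoose n) * (-4)^n"
      using gbinomial_Vandermonde[of "1/2::'a" "1/2" n] by simp
    also have "\<dots> = fps_nth (1 - 4 * fps_X :: 'a fps) n"
    proof -
      have "(1::'a) gchoose n = of_nat (1 choose n)"
        using binomial_gbinomial[of 1 n, where 'a='a] by simp
      then show ?thesis
        by (cases n) (auto simp: numeral_fps_const binomial_eq_0)
    qed
    finally show "fps_nth (Abs_fps u ^ 2) n = fps_nth (1 - 4 * fps_X :: 'a fps) n" .
  qed
  then show ?thesis using S by simp
qed

lemma catalan_eq: "(catalan_fps :: 'a::field_char_0 fps) = 1 + fps_X * catalan_fps^2"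
proof -
  let ?c = "catalan_fps :: 'a fps"
  have "1 - 4 * fps_X * ?c + 4 * fps_X^2 * ?c^2 = 1 - 4 * fps_X"
    using catalan_sq[where 'a='a] by (simp add: power2_eq_square algebra_simps)
  then have "(4 * fps_X) * (1 + fps_X * ?c^2 - ?c) = 0"
    by (simp add: power2_eq_square algebra_simps)
  moreover have "(4 * fps_X :: 'a fps) \<noteq> 0"
    by (metis fps_X_neq_zero mult_eq_0_iff zero_neq_numeral)
  ultimately show ?thesis by simp
qed

lemma A_eq:
  fixes p q r s t :: "'a::field_char_0" and a :: "nat \<Rightarrow> 'a"
  assumes a0: "a 0 = 1" and a1: "a 1 = p" and a2: "a 2 = q"
    and rec: "\<And>n. n \<ge> 3 \<Longrightarrow>
           a n = r * a (n-1) + s * a (n-2) + t * (\<Sum>k=1..n-3. a k * a (n-k-2))"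
  shows "Abs_fps a * (1 - fps_const r * fps_X - fps_const (s - 2*t) * fps_X^2)
     = (1 - fps_const (r-p) * fps_X - fps_const (-q+p*r+s-t) * fps_X^2)
       + fps_const t * fps_X^2 * (Abs_fps a)^2"
proof -
  let ?A = "Abs_fps a"
  have L: "?A * (1 - fps_const r * fps_X - fps_const (s - 2*t) * fps_X^2)
     = ?A - fps_const r * (fps_X * ?A) - fps_const (s - 2*t) * (fps_X^2 * ?A)"
    by (simp add: algebra_simps)
  have R: "(1 - fps_const (r-p) * fps_X - fps_const (-q+p*r+s-t) * fps_X^2)
       + fps_const t * fps_X^2 * ?A^2 = 1 - fps_const (r-p) * fps_X - fps_const (-q+p*r+s-t) * fps_X^2
       + fps_const t * (fps_X^2 * ?A^2)"
    by (simp add: algebra_simps)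
  show ?thesis unfolding L R
  proof (rule fps_ext)
    fix n
    have a1': "a (Suc 0) = p" and a2': "a (Suc (Suc 0)) = q" using a1 a2 by (simp_all add: numeral_2_eq_2)
    have sq: "fps_nth (?A^2) k = (\<Sum>i=0..k. a i * a (k - i))" for k
      by (simp add: power2_eq_square fps_mult_nth)
    consider "n = 0" | "n = 1" | "n = 2" | m where "n = Suc (Suc (Suc m))"
      by (metis One_nat_def Suc_1 not0_implies_Suc)
    then show "fps_nth (?A - fps_const r * (fps_X * ?A) - fps_const (s - 2*t) * (fps_X^2 * ?A)) n
      = fps_nth (1 - fps_const (r-p) * fps_X - fps_const (-q+p*r+s-t) * fps_X^2
       + fps_const t * (fps_X^2 * ?A^2)) n"
    proof cases
      case 1 then show ?thesis by (simp add: a0 fps_X_power_mult_nth)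
    next
      case 2 then show ?thesis by (simp add: a0 a1' fps_X_power_mult_nth)
    next
      case 3 then show ?thesis
        by (simp add: a0 a1' a2' fps_X_power_mult_nth sq algebra_simps numeral_2_eq_2)
    next
      case (4 m)
      have e: "(\<Sum>i=0..Suc m. a i * a (Suc m - i)) = 2 * a (Suc m) + (\<Sum>k=1..m. a k * a (Suc m - k))"
      proof -
        have "(\<Sum>i=0..Suc m. a i * a (Suc m - i)) = a 0 * a (Suc m) + (\<Sum>i=Suc 0..Suc m. a i * a (Suc m - i))"
          by (simp add: sum.atLeast_Suc_atMost)
        also have "(\<Sum>i=Suc 0..Suc m. a i * a (Suc m - i)) = (\<Sum>k=1..m. a k * a (Suc m - k)) + a (Suc m) * a 0"
          by simp
        finally show ?thesis using a0 by simp
      qed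
      have rc: "a (Suc (Suc (Suc m))) = r * a (Suc (Suc m)) + s * a (Suc m) + t * (\<Sum>k=1..m. a k * a (Suc m - k))"
      proof -
        have "a (Suc (Suc (Suc m))) = r * a (Suc (Suc (Suc m)) - 1) + s * a (Suc (Suc (Suc m)) - 2)
           + t * (\<Sum>k=1..Suc (Suc (Suc m)) - 3. a k * a (Suc (Suc (Suc m)) - k - 2))"
          by (rule rec) simp
        also have "(\<Sum>k=1..Suc (Suc (Suc m)) - 3. a k * a (Suc (Suc (Suc m)) - k - 2)) = (\<Sum>k=1..m. a k * a (Suc m - k))"
          by (rule sum.cong) auto
        finally show ?thesis by simp
      qed
      have t1: "fps_nth (fps_const c * (fps_X^2 * G)) (Suc (Suc (Suc m))) = c * fps_nth G (Suc m)" for c and G :: "'a fps"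
        by (simp add: fps_X_power_mult_nth)
      have t2: "fps_nth (fps_const c * (fps_X * G)) (Suc (Suc (Suc m))) = c * fps_nth G (Suc (Suc m))" for c and G :: "'a fps"
        by simp
      have t3: "fps_nth (1 - fps_const (r-p) * fps_X - fps_const (-q+p*r+s-t) * fps_X^2 :: 'a fps) (Suc (Suc (Suc m))) = 0"
        by simp
      have sq2: "fps_nth (?A^2) (Suc m) = 2 * a (Suc m) + (\<Sum>k=1..m. a k * a (Suc m - k))"
        unfolding sq e ..
      show ?thesis unfolding 4 fps_sub_nth fps_add_nth t1 t2 t3 sq2 fps_nth_Abs_fps rc
        by (simp add: algebra_simps)
    qed
  qed
qed

theorem mainTheorem6:
  fixes p q r s t :: "'a::field_char_0" and a :: "nat \<Rightarrow> 'a"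
  assumes "a 0 = 1" and "a 1 = p" and "a 2 = q"
    and "\<And>n. n \<ge> 3 \<Longrightarrow>
           a n = r * a (n-1) + s * a (n-2) + t * (\<Sum>k=1..n-3. a k * a (n-k-2))"
  shows "Abs_fps a =
    riordan_apply
      ((1 - fps_const (r-p) * fps_X - fps_const (-q+p*r+s-t) * fps_X^2)
        / (1 - fps_const r * fps_X - fps_const (s - 2*t) * fps_X^2))
      (fps_const t * fps_X^2 * (1 - fps_const (r-p) * fps_X - fps_const (-q+p*r+s-t) * fps_X^2)
        / (1 - fps_const r * fps_X - fps_const (s - 2*t) * fps_X^2)^2)
      catalan_fps"
proof -
  define N :: "'a fps" where "N = 1 - fps_const (r-p) * fps_X - fps_const (-q+p*r+s-t) * fps_X^2"
  define D :: "'a fps" where "D = 1 - fps_const r * fps_X - fps_const (s - 2*t) * fps_X^2"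
  define T :: "'a fps" where "T = fps_const t * fps_X^2"
  define A where "A = Abs_fps a"
  define I where "I = inverse D"
  define f where "f = T * N / D^2"
  define C where "C = catalan_fps oo f"
  define F where "F = N / D * C"
  have D0: "fps_nth D 0 \<noteq> 0" by (simp add: D_def)
  have DI: "D * I = 1" unfolding I_def using D0 by (rule inverse_mult_eq_1')
  have g: "N / D = N * I" unfolding I_def using D0 by (rule fps_divide_unit)
  have D20: "fps_nth (D^2) 0 \<noteq> 0" using D0 by (simp add: power2_eq_square)
  have fI: "f = T * N * I^2" unfolding f_def I_def
    using fps_divide_unit[OF D20] fps_inverse_power[of D 2] by simp
  have f0: "fps_nth f 0 = 0" unfolding fI T_def
    by (simp add: mult.assoc fps_X_power_mult_nth)
  have CC: "C = 1 + f * C^2"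
  proof -
    have "C = (1 + fps_X * catalan_fps^2) oo f" unfolding C_def using catalan_eq by metis
    also have "\<dots> = 1 + f * C^2"
      by (simp add: fps_compose_add_distrib fps_compose_mult_distrib[OF f0]
          fps_compose_power[OF f0] f0 C_def)
    finally show ?thesis .
  qed
  have FE: "F * D = N + T * F^2"
  proof -
    have "F * D = N * C * (D * I)" unfolding F_def g by (simp add: algebra_simps)
    also have "\<dots> = N * C" using DI by simp
    also have "\<dots> = N + N * f * C^2" by (subst CC) (simp add: algebra_simps)
    also have "\<dots> = N + T * F^2" unfolding fI F_def g by (simp add: algebra_simps power2_eq_square)
    finally show ?thesis .
  qed
  have AE: "A * D = N + T * A^2"
    unfolding A_def D_def N_def T_def using A_eq[OF assms] by simp
  have "(A - F) * (D - T * (A + F)) = 0"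
  proof -
    have "(A - F) * (D - T * (A + F)) = A * D - F * D - T * A^2 + T * F^2"
      by (simp add: algebra_simps power2_eq_square)
    also have "\<dots> = 0" unfolding AE FE by simp
    finally show ?thesis .
  qed
  moreover have "D - T * (A + F) \<noteq> 0"
  proof -
    have "fps_nth (D - T * (A + F)) 0 = 1"
      by (simp add: D_def T_def mult.assoc fps_X_power_mult_nth)
    then show ?thesis by auto
  qed
  ultimately have "A = F" by simp
  then show ?thesis
    unfolding riordan_apply_def A_def F_def C_def f_def T_def N_def D_def .
qed

end
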